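(* Let $\mathcal{T}$ be a finite tree, $w:V(\mathcal{T})\to\mathbb{R}_{\ge0}$, $m=w(\mathcal{T})$, and let $c$ be a centroid of $(\mathcal{T},w)$. Then $$\mathtt{OPT}(\mathcal{T},w)\ge\frac m2+\frac{w(c)}2+\sum_{\mathcal{H}\in\mathbb{C}(\mathcal{T}-c)}\mathtt{OPT}(\mathcal{H},w).$$
   Context: $\mathbb{C}(G)$ denotes the set of connected components of a graph $G$. For a subgraph $\mathcal{H}$, $w(\mathcal{H})=\sum_{x\in V(\mathcal{H})}w(x)$, and $w$ also denotes its restriction to $V(\mathcal{H})$. A search tree on a tree $\mathcal{T}$ is a rooted tree $T$ with vertex set $V(\mathcal{T})$ defined recursively: its root is an arbitrary vertex $r$, and the children of $r$ are the roots of search trees built on the connected components of $\mathcal{T}-r$; a single-vertex tree has only itself as search tree. $\mathtt{cost}_w(T)=\sum_x w(x)\,\mathtt{depth}_T(x)$ with root depth $1$; $\mathtt{OPT}(\mathcal{T},w)$ is the minimum cost over all search trees on $\mathcal{T}$. A vertex $v$ is a centroid of $(\mathcal{T},w)$ if each component $\mathcal{H}$ of $\mathcal{T}-v$ has $w(\mathcal{H})\le w(\mathcal{T})/2$. *)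

theory Defs
  imports Main "HOL-Library.Multiset" Complex_Main
begin

text \<open>An undirected graph is given by a symmetric, irreflexive adjacency relation
  E on a vertex type; subgraphs are the induced subgraphs on vertex sets S.\<close>

definition reach :: "('a \<Rightarrow> 'a \<Rightarrow> bool) \<Rightarrow> 'a set \<Rightarrow> 'a \<Rightarrow> 'a \<Rightarrow> bool" where
  "reach E S = (\<lambda>x y. x \<in> S \<and> y \<in> S \<and> E x y)\<^sup>*\<^sup>*"

definition component :: "('a \<Rightarrow> 'a \<Rightarrow> bool) \<Rightarrow> 'a set \<Rightarrow> 'a \<Rightarrow> 'a set" where
  "component E S x = {y. reach E S x y}"

definition components :: "('a \<Rightarrow> 'a \<Rightarrow> bool) \<Rightarrow> 'a set \<Rightarrow> 'a set set" where
  "components E S = component E S ` S"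

definition edges :: "('a \<Rightarrow> 'a \<Rightarrow> bool) \<Rightarrow> 'a set \<Rightarrow> 'a set set" where
  "edges E S = {{x, y} | x y. x \<in> S \<and> y \<in> S \<and> E x y}"

definition is_tree :: "('a \<Rightarrow> 'a \<Rightarrow> bool) \<Rightarrow> 'a set \<Rightarrow> bool" where
  "is_tree E S \<longleftrightarrow> finite S \<and> S \<noteq> {} \<and> (\<forall>x\<in>S. \<forall>y\<in>S. reach E S x y)
     \<and> card (edges E S) = card S - 1"

datatype 'a rtree = Node 'a "'a rtree list"

inductive search_tree :: "('a \<Rightarrow> 'a \<Rightarrow> bool) \<Rightarrow> 'a set \<Rightarrow> 'a rtree \<Rightarrow> bool"
  for E where
  "\<lbrakk> r \<in> S; distinct Cs; set Cs = components E (S - {r});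
     list_all2 (search_tree E) Cs ts \<rbrakk> \<Longrightarrow> search_tree E S (Node r ts)"

fun cost_at :: "('a \<Rightarrow> real) \<Rightarrow> nat \<Rightarrow> 'a rtree \<Rightarrow> real" where
  "cost_at w d (Node r ts) = real d * w r + sum_list (map (cost_at w (Suc d)) ts)"

definition cost :: "('a \<Rightarrow> real) \<Rightarrow> 'a rtree \<Rightarrow> real" where
  "cost w t = cost_at w 1 t"

definition OPT :: "('a \<Rightarrow> 'a \<Rightarrow> bool) \<Rightarrow> 'a set \<Rightarrow> ('a \<Rightarrow> real) \<Rightarrow> real" where
  "OPT E S w = Inf {cost w t | t. search_tree E S t}"

definition centroid :: "('a \<Rightarrow> 'a \<Rightarrow> bool) \<Rightarrow> 'a set \<Rightarrow> ('a \<Rightarrow> real) \<Rightarrow> 'a \<Rightarrow> bool" where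
  "centroid E S w v \<longleftrightarrow> v \<in> S \<and>
     (\<forall>H \<in> components E (S - {v}). sum w H \<le> sum w S / 2)"

end

theory Submission
  imports Defs
begin


lemma reach_cases: "reach E S x y \<Longrightarrow> x = y \<or> (x \<in> S \<and> y \<in> S)"
  unfolding reach_def by (induction rule: rtranclp_induct) auto

lemma reach_refl: "reach E S x x"
  unfolding reach_def by simp

lemma reach_step: "x \<in> S \<Longrightarrow> y \<in> S \<Longrightarrow> E x y \<Longrightarrow> reach E S x y"
  unfolding reach_def by (rule r_into_rtranclp) simp

lemma reach_trans: "reach E S x y \<Longrightarrow> reach E S y z \<Longrightarrow> reach E S x z"
  unfolding reach_def by (rule rtranclp_trans)

lemma reach_sym: assumes "symp E" shows "reach E S x y \<Longrightarrow> reach E S y x"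
  unfolding reach_def
proof (induction rule: rtranclp_induct)
  case base then show ?case by simp
next
  case (step y z)
  then have "(\<lambda>x y. x \<in> S \<and> y \<in> S \<and> E x y) z y" using assms by (meson sympD)
  from converse_rtranclp_into_rtranclp[OF this step.IH] show ?case .
qed

lemma reach_mono: assumes "S \<subseteq> S'" shows "reach E S x y \<Longrightarrow> reach E S' x y"
  unfolding reach_def
  by (induction rule: rtranclp_induct) (use assms in \<open>auto intro: rtranclp.rtrancl_into_rtrancl\<close>)

lemma comp_sub: "x \<in> S \<Longrightarrow> component E S x \<subseteq> S"
  unfolding component_def using reach_cases by fastforce

lemma comp_self: "x \<in> component E S x"
  unfolding component_def by (simp add: reach_refl)

lemma comp_eq: assumes "symp E" "y \<in> component E S x"
  shows "component E S y = component E S x"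
  using assms unfolding component_def
  by (auto intro: reach_trans reach_sym)

lemma components_disj: assumes "symp E" "C1 \<in> components E S" "C2 \<in> components E S"
  "z \<in> C1" "z \<in> C2" shows "C1 = C2"
  using assms unfolding components_def by (metis comp_eq imageE)

lemma Union_components: "\<Union> (components E S) = S"
  unfolding components_def using comp_sub comp_self by fastforce

lemma components_sub: "C \<in> components E S \<Longrightarrow> C \<subseteq> S"
  unfolding components_def using comp_sub by (metis imageE)

lemma components_ne: "C \<in> components E S \<Longrightarrow> C \<noteq> {}"
  unfolding components_def using comp_self by fastforce

lemma finite_components: "finite S \<Longrightarrow> finite (components E S)"
  unfolding components_def by simp

lemma in_components: "x \<in> S \<Longrightarrow> component E S x \<in> components E S"
  unfolding components_def by simp

lemma sum_components: assumes "symp E" "finite S"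
  shows "sum f S = (\<Sum>C\<in>components E S. sum f C)"
proof -
  have "sum f (\<Union> (components E S)) = (sum \<circ> sum) f (components E S)"
  proof (rule sum.Union_disjoint)
    show "\<forall>A\<in>components E S. finite A"
    proof
      fix A assume "A \<in> components E S"
      then have "A \<subseteq> S" by (rule components_sub)
      then show "finite A" using assms(2) by (rule finite_subset)
    qed
    show "\<forall>A\<in>components E S. \<forall>B\<in>components E S. A \<noteq> B \<longrightarrow> A \<inter> B = {}"
      using components_disj[OF assms(1)] by (metis disjoint_iff)
  qed
  then show ?thesis by (simp add: Union_components)
qed

lemma comp_conn0: assumes "reach E S x y" shows "reach E (component E S x) x y"
  using assms unfolding reach_def
proof (induction rule: rtranclp_induct)
  case base then show ?case by simp
next
  case (step y z)
  have r: "(\<lambda>x y. x \<in> S \<and> y \<in> S \<and> E x y) y z" using step(2) by simp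
  have "y \<in> component E S x" "z \<in> component E S x"
    using step(1) rtranclp.rtrancl_into_rtrancl[OF step(1) r] unfolding component_def reach_def by auto
  with step show ?case by (auto intro: rtranclp.rtrancl_into_rtrancl)
qed

lemma comp_conn: assumes "symp E" "y \<in> component E S x" "z \<in> component E S x"
  shows "reach E (component E S x) y z"
proof -
  have "reach E (component E S x) x y" "reach E (component E S x) x z"
    using assms comp_conn0 unfolding component_def by auto
  then show ?thesis using reach_sym[OF assms(1)] reach_trans by metis
qed

lemma components_conn: assumes "symp E" "C \<in> components E S" "y \<in> C" "z \<in> C"
  shows "reach E C y z"
proof -
  obtain x where "C = component E S x" using assms(2) unfolding components_def by blast
  then show ?thesis using comp_conn[OF assms(1)] assms(3,4) by simp
qed

lemma conn_sub_comp: assumes "\<forall>a\<in>H. \<forall>b\<in>H. reach E H a b" "H \<subseteq> S" "x \<in> H"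
  shows "H \<subseteq> component E S x"
proof
  fix y assume "y \<in> H"
  then have "reach E H x y" using assms(1,3) by simp
  then have "reach E S x y" using reach_mono[OF assms(2)] by simp
  then show "y \<in> component E S x" unfolding component_def by simp
qed

lemma finite_edges: assumes "finite A" shows "finite (edges R A)"
proof -
  have "edges R A \<subseteq> Pow A" unfolding edges_def by auto
  then show ?thesis by (rule finite_subset) (simp add: assms)
qed

lemma grow0: "reach R S x y \<Longrightarrow> y \<in> A \<or> (\<exists>a b. a \<in> A \<and> b \<notin> A \<and> a \<in> S \<and> b \<in> S \<and> R a b) \<or> x \<notin> A"
  unfolding reach_def
proof (induction rule: rtranclp_induct)
  case base then show ?case by blast
next
  case (step y z)
  then have r: "y \<in> S" "z \<in> S" "R y z" by auto
  show ?case
  proof (cases "y \<in> A")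
    case True
    show ?thesis
    proof (cases "z \<in> A")
      case True then show ?thesis by (rule disjI1)
    next
      case False
      have "\<exists>a b. a \<in> A \<and> b \<notin> A \<and> a \<in> S \<and> b \<in> S \<and> R a b"
        using \<open>y \<in> A\<close> False r by auto
      then show ?thesis by (intro disjI2 disjI1)
    qed
  next
    case False
    then show ?thesis using step.IH by metis
  qed
qed

lemma grow: assumes "reach R S x y" "x \<in> A"
  shows "y \<in> A \<or> (\<exists>a b. a \<in> A \<and> b \<notin> A \<and> a \<in> S \<and> b \<in> S \<and> R a b)"
  using grow0[OF assms(1), of A] assms(2) by blast

lemma conn_edges: assumes "finite S" "S \<noteq> {}" "\<forall>x\<in>S. \<forall>y\<in>S. reach R S x y"
  shows "card S - 1 \<le> card (edges R S)"
proof -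
  have "\<forall>k. 1 \<le> k \<longrightarrow> k \<le> card S \<longrightarrow> (\<exists>A\<subseteq>S. card A = k \<and> k - 1 \<le> card (edges R A))"
  proof
    fix k show "1 \<le> k \<longrightarrow> k \<le> card S \<longrightarrow> (\<exists>A\<subseteq>S. card A = k \<and> k - 1 \<le> card (edges R A))"
    proof (induction k)
      case 0 then show ?case by simp
    next
      case (Suc k)
      show ?case
      proof (intro impI)
        assume k: "Suc k \<le> card S"
        show "\<exists>A\<subseteq>S. card A = Suc k \<and> Suc k - 1 \<le> card (edges R A)"
        proof (cases "k = 0")
          case True
          obtain x where "x \<in> S" using assms(2) by blast
          then show ?thesis using True by (intro exI[of _ "{x}"]) auto
        next
          case False
          then obtain A where A: "A \<subseteq> S" "card A = k" "k - 1 \<le> card (edges R A)"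
            using Suc k by auto
          have finA: "finite A" using A(1) assms(1) finite_subset by blast
          have "A \<noteq> S" using A(2) k by auto
          then obtain y where y: "y \<in> S" "y \<notin> A" using A(1) by blast
          obtain x where x: "x \<in> A" using A(2) False by fastforce
          have "reach R S x y" using assms(3) x y A(1) by blast
          then obtain a b where ab: "a \<in> A" "b \<notin> A" "a \<in> S" "b \<in> S" "R a b"
            using grow[OF _ x] y by blast
          let ?A = "insert b A"
          have e1: "insert {a,b} (edges R A) \<subseteq> edges R ?A"
            unfolding edges_def using ab by blast
          have e2: "{a,b} \<notin> edges R A"
            unfolding edges_def using ab by (auto simp: doubleton_eq_iff)
          have "card (insert {a,b} (edges R A)) \<le> card (edges R ?A)"
            by (rule card_mono[OF finite_edges e1]) (simp add: finA)
          moreover have "card (insert {a,b} (edges R A)) = Suc (card (edges R A))"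
            using e2 finite_edges[OF finA] by simp
          ultimately show ?thesis using A ab finA
            by (intro exI[of _ ?A]) auto
        qed
      qed
    qed
  qed
  then obtain A where "A \<subseteq> S" "card A = card S" "card S - 1 \<le> card (edges R A)"
    using assms(1,2) by (metis One_nat_def Suc_leI card_gt_0_iff order_refl)
  moreover then have "A = S" using assms(1) card_subset_eq by blast
  ultimately show ?thesis by simp
qed



lemma no_cycle:
  assumes sym: "symp E" and irr: "irreflp E" and tree: "is_tree E T"
    and r: "r \<in> T" and e1: "E r u1" and e2: "E r u2" and ne: "u1 \<noteq> u2"
    and p: "reach E (T - {r}) u1 u2"
  shows False
proof -
  have u: "u1 \<in> T - {r}" "u2 \<in> T - {r}" using reach_cases[OF p] ne by auto
  define E' where "E' = (\<lambda>x y. E x y \<and> {x,y} \<noteq> {r,u1})"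
  have finT: "finite T" using tree unfolding is_tree_def by simp
  have ed: "edges E' T = edges E T - {{r,u1}}"
    unfolding edges_def E'_def by blast
  have inn: "{r,u1} \<in> edges E T" unfolding edges_def using r u e1 by blast
  have c1: "card (edges E' T) = card (edges E T) - 1"
    unfolding ed using inn finite_edges[OF finT] by simp
  have c2: "card (edges E T) = card T - 1" using tree unfolding is_tree_def by simp
  have "r \<noteq> u1" using u by blast
  then have "card {r, u1} = 2" by simp
  moreover have "{r,u1} \<subseteq> T" using r u by simp
  ultimately have c3: "2 \<le> card T" using card_mono[OF finT] by metis
  have E'r2: "E' r u2" unfolding E'_def using e2 ne u by (auto simp: doubleton_eq_iff)
  have E'2r: "E' u2 r" unfolding E'_def using e2 ne u sym by (auto simp: doubleton_eq_iff dest: sympD)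
  have lift: "reach E' T a b" if "reach E (T - {r}) a b" for a b
    using that unfolding reach_def
  proof (induction rule: rtranclp_induct)
    case base then show ?case by simp
  next
    case (step y z)
    then have "y \<in> T" "z \<in> T" "E' y z" unfolding E'_def by (auto simp: doubleton_eq_iff)
    then have "(\<lambda>x y. x \<in> T \<and> y \<in> T \<and> E' x y) y z" by simp
    from rtranclp.rtrancl_into_rtrancl[OF step.IH this] show ?case .
  qed
  have p21: "reach E (T - {r}) u2 u1" using reach_sym[OF sym p] .
  have u2T: "u2 \<in> T" using u by blast
  have ru1: "reach E' T r u1"
    using reach_trans[OF reach_step[of r T u2 E', OF r u2T E'r2] lift[OF p21]] .
  have u1r: "reach E' T u1 r"
    using reach_trans[OF lift[OF p] reach_step[of u2 T r E', OF u2T r E'2r]] .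
  have conv: "reach E' T a b" if "reach E T a b" for a b
    using that unfolding reach_def
  proof (induction rule: rtranclp_induct)
    case base then show ?case by simp
  next
    case (step y z)
    then have yz: "y \<in> T" "z \<in> T" "E y z" by auto
    show ?case
    proof (cases "{y,z} = {r,u1}")
      case True
      then have "(y = r \<and> z = u1) \<or> (y = u1 \<and> z = r)" by (auto simp: doubleton_eq_iff)
      then have "reach E' T y z" using ru1 u1r by auto
      then show ?thesis using step.IH unfolding reach_def by simp
    next
      case False
      then have "(\<lambda>x y. x \<in> T \<and> y \<in> T \<and> E' x y) y z" using yz unfolding E'_def by simp
      from rtranclp.rtrancl_into_rtrancl[OF step.IH this] show ?thesis .
    qed
  qed
  have "\<forall>x\<in>T. \<forall>y\<in>T. reach E' T x y"
    using tree conv unfolding is_tree_def by blast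
  then have "card T - 1 \<le> card (edges E' T)"
    using conn_edges[OF finT] r by blast
  then show False using c1 c2 c3 by linarith
qed

lemma nb_comp:
  assumes sym: "symp E" and conn: "\<forall>a\<in>H. \<forall>b\<in>H. reach E H a b" and r: "r \<in> H"
    and D: "D \<in> components E (H - {r})"
  shows "\<exists>u\<in>D. E r u"
proof -
  obtain x where x: "x \<in> H - {r}" "D = component E (H - {r}) x"
    using D unfolding components_def by blast
  have Dsub: "D \<subseteq> H - {r}" using comp_sub x by metis
  have gen: "b \<in> D \<or> (\<exists>u\<in>D. E u r)" if "reach E H a b" "a \<in> D" for a b
    using that unfolding reach_def
  proof (induction rule: rtranclp_induct)
    case base then show ?case by simp
  next
    case (step y z)
    then have yz: "y \<in> H" "z \<in> H" "E y z" by auto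
    show ?case
    proof (cases "y \<in> D")
      case True
      show ?thesis
      proof (cases "z = r")
        case True
        then show ?thesis using \<open>y \<in> D\<close> yz by blast
      next
        case False
        have "y \<in> H - {r}" "z \<in> H - {r}" using \<open>y \<in> D\<close> Dsub yz False by auto
        then have "reach E (H - {r}) y z" using reach_step yz by metis
        moreover have "reach E (H - {r}) x y" using \<open>y \<in> D\<close> x unfolding component_def by simp
        ultimately have "reach E (H - {r}) x z" by (rule reach_trans[rotated])
        then show ?thesis using x unfolding component_def by simp
      qed
    next
      case False
      then show ?thesis using step.IH step.prems by simp
    qed
  qed
  have "x \<in> D" using x comp_self by metis
  moreover have "reach E H x r" using conn x r by simp
  ultimately have "r \<in> D \<or> (\<exists>u\<in>D. E u r)" using gen by blast
  then obtain u where "u \<in> D" "E u r" using Dsub by blast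
  then show ?thesis using sym by (meson sympD)
qed

lemma same_child:
  assumes sym: "symp E" and irr: "irreflp E" and tree: "is_tree E T"
    and ST: "S \<subseteq> T" and r: "r \<in> H" and HS: "H \<subseteq> S"
    and conn: "\<forall>a\<in>H. \<forall>b\<in>H. reach E H a b"
    and D1: "D1 \<in> components E (H - {r})" and D2: "D2 \<in> components E (H - {r})"
    and C: "C \<in> components E (S - {r})" and s1: "D1 \<subseteq> C" and s2: "D2 \<subseteq> C"
  shows "D1 = D2"
proof -
  obtain u1 where u1: "u1 \<in> D1" "E r u1" using nb_comp[OF sym conn r D1] by blast
  obtain u2 where u2: "u2 \<in> D2" "E r u2" using nb_comp[OF sym conn r D2] by blast
  show ?thesis
  proof (cases "u1 = u2")
    case True
    then show ?thesis using components_disj[OF sym D1 D2] u1 u2 by simp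
  next
    case False
    have "u1 \<in> C" "u2 \<in> C" using u1 u2 s1 s2 by auto
    then have "reach E C u1 u2" using components_conn[OF sym C] by simp
    moreover have "C \<subseteq> T - {r}" using components_sub[OF C] ST by blast
    ultimately have "reach E (T - {r}) u1 u2" using reach_mono by metis
    moreover have "r \<in> T" using r HS ST by blast
    ultimately show ?thesis using no_cycle[OF sym irr tree _ u1(2) u2(2) False] by blast
  qed
qed



fun rt_root :: "'a rtree \<Rightarrow> 'a" where "rt_root (Node r ts) = r"

lemma cost_add: "cost_at (\<lambda>x. f x + g x) d t = cost_at f d t + cost_at g d t"
proof (induction t arbitrary: d)
  case (Node r ts)
  have "sum_list (map (cost_at (\<lambda>x. f x + g x) (Suc d)) ts) = sum_list (map (\<lambda>t. cost_at f (Suc d) t + cost_at g (Suc d) t) ts)"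
    by (rule arg_cong[where f=sum_list], rule map_cong) (simp_all add: Node.IH)
  also have "\<dots> = sum_list (map (cost_at f (Suc d)) ts) + sum_list (map (cost_at g (Suc d)) ts)"
    by (rule sum_list_addf)
  finally show ?case by (simp add: algebra_simps)
qed

lemma cost_zero: "cost_at (\<lambda>x. 0) d t = 0"
proof (induction t arbitrary: d)
  case (Node r ts)
  have "sum_list (map (cost_at (\<lambda>x. 0) (Suc d)) ts) = sum_list (map (\<lambda>t. 0::real) ts)"
    by (rule arg_cong[where f=sum_list], rule map_cong) (simp_all add: Node.IH)
  then show ?case by simp
qed

lemma cost_sum: "finite I \<Longrightarrow> cost_at (\<lambda>x. \<Sum>i\<in>I. F i x) d t = (\<Sum>i\<in>I. cost_at (F i) d t)"
proof (induction I rule: finite_induct)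
  case empty then show ?case using cost_zero by simp
next
  case (insert i I)
  have "(\<lambda>x. \<Sum>j\<in>insert i I. F j x) = (\<lambda>x. F i x + (\<Sum>j\<in>I. F j x))"
    using insert by simp
  then show ?case using insert cost_add[of "F i" "\<lambda>x. \<Sum>j\<in>I. F j x"] by simp
qed

lemma la2_sum_eq: "list_all2 P xs ys \<Longrightarrow> (\<And>x y. x \<in> set xs \<Longrightarrow> P x y \<Longrightarrow> g y = h x + k y) \<Longrightarrow>
   sum_list (map g ys) = sum_list (map h xs) + (sum_list (map k ys) :: real)"
  by (induction rule: list_all2_induct) auto

lemma la2_sum_le: "list_all2 P xs ys \<Longrightarrow> (\<And>x y. x \<in> set xs \<Longrightarrow> P x y \<Longrightarrow> h x \<le> g y) \<Longrightarrow>
   sum_list (map h xs) \<le> (sum_list (map g ys) :: real)"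
  by (induction rule: list_all2_induct) (auto intro: add_mono)

lemma la2_sum_le2: "list_all2 P xs ys \<Longrightarrow> (\<And>x y. x \<in> set xs \<Longrightarrow> P x y \<Longrightarrow> h y \<le> g y) \<Longrightarrow>
   sum_list (map h ys) \<le> (sum_list (map g ys) :: real)"
  by (induction rule: list_all2_induct) (auto intro: add_mono)

lemma la2_left: "list_all2 P xs ys \<Longrightarrow> x \<in> set xs \<Longrightarrow> \<exists>y. P x y"
  by (induction rule: list_all2_induct) auto

lemma st_finite: "search_tree E S t \<Longrightarrow> finite S"
proof (induction rule: search_tree.induct)
  case (1 r S Cs ts)
  have "\<forall>C\<in>set Cs. finite C" using la2_left[OF 1(4)] by blast
  then have "finite (\<Union> (components E (S - {r})))" using 1(3) finite_components
    by (metis List.finite_set finite_Union)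
  then have "finite (S - {r})" by (simp add: Union_components)
  then show ?case by simp
qed

lemma st_root: "search_tree E S t \<Longrightarrow> rt_root t \<in> S"
  by (cases rule: search_tree.cases) auto

lemma st_shift0:
  assumes sym: "symp E"
  shows "search_tree E S t \<Longrightarrow> \<forall>d. cost_at f (Suc d) t = cost_at f d t + sum f S"
proof (induction rule: search_tree.induct)
  case (1 r S Cs ts)
  have st: "search_tree E S (Node r ts)" using 1 search_tree.intros
    by (metis (no_types, lifting) list_all2_mono)
  have fin: "finite S" using st_finite[OF st] .
  show ?case
  proof
    fix d
    have "sum_list (map (cost_at f (Suc (Suc d))) ts) =
       sum_list (map (sum f) Cs) + sum_list (map (cost_at f (Suc d)) ts)"
      by (rule la2_sum_eq[OF 1(4)]) auto
    also have "sum_list (map (sum f) Cs) = sum (sum f) (set Cs)"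
      using 1(2) by (simp add: sum_list_distinct_conv_sum_set)
    also have "\<dots> = sum f (S - {r})"
      using 1(3) sum_components[OF sym, of "S - {r}" f] fin by simp
    finally have eq: "sum_list (map (cost_at f (Suc (Suc d))) ts) =
       sum f (S - {r}) + sum_list (map (cost_at f (Suc d)) ts)" .
    have "sum f S = f r + sum f (S - {r})" using fin 1(1) by (simp add: sum.remove)
    then show "cost_at f (Suc d) (Node r ts) = cost_at f d (Node r ts) + sum f S"
      using eq by (simp add: algebra_simps)
  qed
qed

lemma st_shift: "symp E \<Longrightarrow> search_tree E S t \<Longrightarrow> cost_at f (Suc d) t = cost_at f d t + sum f S"
  using st_shift0 by blast

lemma st_lin: "symp E \<Longrightarrow> search_tree E S t \<Longrightarrow> cost_at f (d + k) t = cost_at f d t + real k * sum f S"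
  by (induction k) (auto simp: st_shift algebra_simps)

lemma st_nonneg0: "search_tree E S t \<Longrightarrow> \<forall>d. (\<forall>x\<in>S. 0 \<le> f x) \<longrightarrow> 0 \<le> cost_at f d t"
proof (induction rule: search_tree.induct)
  case (1 r S Cs ts)
  show ?case
  proof (intro allI impI)
    fix d assume nn: "\<forall>x\<in>S. 0 \<le> f x"
    have "sum_list (map (\<lambda>_. 0) Cs) \<le> sum_list (map (cost_at f (Suc d)) ts)"
    proof (rule la2_sum_le[OF 1(4)])
      fix C t assume C: "C \<in> set Cs" and "search_tree E C t \<and> (\<forall>d. (\<forall>x\<in>C. 0 \<le> f x) \<longrightarrow> 0 \<le> cost_at f d t)"
      moreover have "C \<subseteq> S" using C 1(3) components_sub by blast
      ultimately show "0 \<le> cost_at f (Suc d) t" using nn by blast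
    qed
    then show "0 \<le> cost_at f d (Node r ts)" using nn 1(1) by simp
  qed
qed

lemma st_nonneg: "search_tree E S t \<Longrightarrow> \<forall>x\<in>S. 0 \<le> f x \<Longrightarrow> 0 \<le> cost_at f d t"
  using st_nonneg0 by blast

lemma st_lb: "symp E \<Longrightarrow> search_tree E S t \<Longrightarrow> \<forall>x\<in>S. 0 \<le> f x \<Longrightarrow> real d * sum f S \<le> cost_at f d t"
  using st_lin[of E S t f 0 d] st_nonneg[of E S t f 0] by simp

lemma st_mono_d: assumes "symp E" "search_tree E S t" "\<forall>x\<in>S. 0 \<le> f x" "d \<le> d'"
  shows "cost_at f d t \<le> cost_at f d' t"
proof -
  obtain k where k: "d' = d + k" using assms(4) le_Suc_ex by blast
  have "0 \<le> sum f S" using assms(3) by (simp add: sum_nonneg)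
  then show ?thesis using st_lin[OF assms(1,2), of f d k] k by simp
qed

lemma st_mono_w0: "search_tree E S t \<Longrightarrow> \<forall>d. (\<forall>x\<in>S. f x \<le> g x) \<longrightarrow> cost_at f d t \<le> cost_at g d t"
proof (induction rule: search_tree.induct)
  case (1 r S Cs ts)
  show ?case
  proof (intro allI impI)
    fix d assume nn: "\<forall>x\<in>S. f x \<le> g x"
    have "sum_list (map (cost_at f (Suc d)) ts) \<le> sum_list (map (cost_at g (Suc d)) ts)"
    proof (rule la2_sum_le2[OF 1(4)])
      fix C t assume C: "C \<in> set Cs" and "search_tree E C t \<and> (\<forall>d. (\<forall>x\<in>C. f x \<le> g x) \<longrightarrow> cost_at f d t \<le> cost_at g d t)"
      moreover have "C \<subseteq> S" using C 1(3) components_sub by blast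
      ultimately show "cost_at f (Suc d) t \<le> cost_at g (Suc d) t" using nn by blast
    qed
    then show "cost_at f d (Node r ts) \<le> cost_at g d (Node r ts)" using nn 1(1)
      by (simp add: add_mono mult_left_mono)
  qed
qed

lemma st_mono_w: "search_tree E S t \<Longrightarrow> \<forall>x\<in>S. f x \<le> g x \<Longrightarrow> cost_at f d t \<le> cost_at g d t"
  using st_mono_w0 by blast

lemma st_cong: "search_tree E S t \<Longrightarrow> \<forall>x\<in>S. f x = g x \<Longrightarrow> cost_at f d t = cost_at g d t"
  using st_mono_w[of E S t f g d] st_mono_w[of E S t g f d] by fastforce

lemma st_exists: "finite S \<Longrightarrow> S \<noteq> {} \<Longrightarrow> \<exists>t. search_tree E S t"
proof (induction "card S" arbitrary: S rule: less_induct)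
  case less
  obtain r where r: "r \<in> S" using less.prems by blast
  have "finite (components E (S - {r}))" using less.prems finite_components by blast
  then obtain Cs where Cs: "set Cs = components E (S - {r})" "distinct Cs"
    using finite_distinct_list by blast
  have ex: "\<exists>t. search_tree E C t" if "C \<in> set Cs" for C
  proof -
    have sub: "C \<subseteq> S - {r}" using that Cs(1) components_sub by blast
    have "card C \<le> card (S - {r})" using sub less.prems(1) by (simp add: card_mono)
    moreover have "card (S - {r}) < card S" using r less.prems(1) by (metis card_Diff1_less)
    ultimately have "card C < card S" by linarith
    moreover have "finite C" using sub less.prems(1) finite_subset by blast
    moreover have "C \<noteq> {}" using that Cs(1) components_ne by blast
    ultimately show ?thesis using less.hyps by blast
  qed
  define ts where "ts = map (\<lambda>C. SOME t. search_tree E C t) Cs"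
  have "list_all2 (search_tree E) Cs ts"
    unfolding list_all2_conv_all_nth
  proof
    show "length Cs = length ts" unfolding ts_def by simp
    show "\<forall>i<length Cs. search_tree E (Cs ! i) (ts ! i)"
    proof (intro allI impI)
      fix i assume i: "i < length Cs"
      have "ts ! i = (SOME t. search_tree E (Cs ! i) t)" unfolding ts_def using i by simp
      moreover have "\<exists>t. search_tree E (Cs ! i) t" using ex nth_mem[OF i] by blast
      ultimately show "search_tree E (Cs ! i) (ts ! i)" using someI_ex by metis
    qed
  qed
  then show ?case using search_tree.intros[OF r Cs(2) Cs(1)] by blast
qed



lemma restrict0:
  assumes sym: "symp E" and irr: "irreflp E" and tree: "is_tree E T"
  shows "search_tree E S t \<Longrightarrow> \<forall>H d. S \<subseteq> T \<longrightarrow> (\<forall>x\<in>S. 0 \<le> w x) \<longrightarrow> H \<subseteq> S \<longrightarrow> H \<noteq> {}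
     \<longrightarrow> (\<forall>a\<in>H. \<forall>b\<in>H. reach E H a b) \<longrightarrow>
     (\<exists>t'. search_tree E H t' \<and> cost_at w (if rt_root t \<in> H then d else Suc d) t'
              \<le> cost_at (\<lambda>x. if x \<in> H then w x else 0) d t)"
proof (induction rule: search_tree.induct)
  case (1 r S Cs ts)
  note child = list_all2_nthD[OF 1(4)]
  have stN: "search_tree E S (Node r ts)" using 1 search_tree.intros
    by (metis (no_types, lifting) list_all2_mono)
  have finS: "finite S" using st_finite[OF stN] .
  have len: "length Cs = length ts" using 1(4) list_all2_lengthD by blast
  have Cs_sub: "Cs ! i \<subseteq> S - {r}" if "i < length Cs" for i
    using 1(3) components_sub nth_mem[OF that] by metis
  show ?case
  proof (intro allI impI)
    fix H d assume ST: "S \<subseteq> T" and nn: "\<forall>x\<in>S. 0 \<le> w x" and HS: "H \<subseteq> S" and Hne: "H \<noteq> {}"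
      and conn: "\<forall>a\<in>H. \<forall>b\<in>H. reach E H a b"
    define wH where "wH = (\<lambda>x. if x \<in> H then w x else 0)"
    have nnH: "\<forall>x\<in>S. 0 \<le> wH x" using nn unfolding wH_def by simp
    have CT: "Cs ! i \<subseteq> T" if "i < length Cs" for i using Cs_sub[OF that] ST by blast
    have nnCi: "\<forall>x\<in>Cs ! i. 0 \<le> w x" if "i < length Cs" for i using Cs_sub[OF that] nn by blast
    have sti: "search_tree E (Cs ! i) (ts ! i)" if "i < length Cs" for i
      using child[OF that] by blast
    have sum_ts: "sum_list (map (cost_at wH (Suc d)) ts) = (\<Sum>i<length ts. cost_at wH (Suc d) (ts ! i))"
      by (simp add: sum_list_sum_nth atLeast0LessThan)
    have nnc: "0 \<le> cost_at wH (Suc d) (ts ! i)" if "i < length ts" for i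
    proof (rule st_nonneg[OF sti])
      show "i < length Cs" using that len by simp
      show "\<forall>x\<in>Cs ! i. 0 \<le> wH x" using nnH Cs_sub[of i] that len by auto
    qed
    show "\<exists>t'. search_tree E H t' \<and> cost_at w (if rt_root (Node r ts) \<in> H then d else Suc d) t'
              \<le> cost_at (\<lambda>x. if x \<in> H then w x else 0) d (Node r ts)"
    proof (cases "r \<in> H")
      case False
      obtain x where x: "x \<in> H" using Hne by blast
      have HSr: "H \<subseteq> S - {r}" using HS False by blast
      have Hsub: "H \<subseteq> component E (S - {r}) x" by (rule conn_sub_comp[OF conn HSr x])
      have xS: "x \<in> S - {r}" using x HSr by blast
      have "component E (S - {r}) x \<in> set Cs" using 1(3) in_components[OF xS] by simp
      then obtain i where i: "i < length Cs" "Cs ! i = component E (S - {r}) x"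
        by (metis in_set_conv_nth)
      have IHi: "\<forall>H d. Cs ! i \<subseteq> T \<longrightarrow> (\<forall>x\<in>Cs ! i. 0 \<le> w x) \<longrightarrow> H \<subseteq> Cs ! i \<longrightarrow> H \<noteq> {}
         \<longrightarrow> (\<forall>a\<in>H. \<forall>b\<in>H. reach E H a b) \<longrightarrow>
         (\<exists>t'. search_tree E H t' \<and> cost_at w (if rt_root (ts ! i) \<in> H then d else Suc d) t'
              \<le> cost_at (\<lambda>x. if x \<in> H then w x else 0) d (ts ! i))"
        using child[OF i(1)] by blast
      have HCi: "H \<subseteq> Cs ! i" using Hsub i(2) by simp
      obtain t' where t': "search_tree E H t'"
        "cost_at w (if rt_root (ts ! i) \<in> H then Suc d else Suc (Suc d)) t' \<le> cost_at wH (Suc d) (ts ! i)"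
        using IHi[rule_format (no_asm), OF CT[OF i(1)] nnCi[OF i(1)] HCi Hne conn, of "Suc d"] unfolding wH_def
        by blast
      have nnHH: "\<forall>x\<in>H. 0 \<le> w x" using nn HS by blast
      have "cost_at w (Suc d) t' \<le> cost_at w (if rt_root (ts ! i) \<in> H then Suc d else Suc (Suc d)) t'"
        by (rule st_mono_d[OF sym t'(1) nnHH]) simp
      also note t'(2)
      also have "cost_at wH (Suc d) (ts ! i) \<le> (\<Sum>j<length ts. cost_at wH (Suc d) (ts ! j))"
        by (rule member_le_sum) (use i len nnc in auto)
      also have "\<dots> = cost_at wH d (Node r ts)"
        using sum_ts False unfolding wH_def by simp
      finally show ?thesis using t'(1) False unfolding wH_def by auto
    next
      case True
      have finH: "finite H" using HS finS finite_subset by blast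
      obtain Ds where Ds: "set Ds = components E (H - {r})" "distinct Ds"
        using finite_distinct_list[OF finite_components[of "H - {r}" E]] finH by auto
      have exi: "\<exists>i. i < length Cs \<and> D \<subseteq> Cs ! i" if D: "D \<in> set Ds" for D
      proof -
        obtain y where y: "y \<in> H - {r}" "D = component E (H - {r}) y"
          using D Ds(1) unfolding components_def by blast
        have Dsub: "D \<subseteq> component E (S - {r}) y"
          unfolding y(2) component_def using reach_mono[of "H - {r}" "S - {r}"] HS by blast
        have yS: "y \<in> S - {r}" using y HS by blast
        have "component E (S - {r}) y \<in> set Cs" using 1(3) in_components[OF yS] by simp
        then obtain i where "i < length Cs" "Cs ! i = component E (S - {r}) y"
          by (metis in_set_conv_nth)
        then show ?thesis using Dsub by auto
      qed
      define ix where "ix D = (SOME i. i < length Cs \<and> D \<subseteq> Cs ! i)" for D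
      have ix: "ix D < length Cs \<and> D \<subseteq> Cs ! ix D" if "D \<in> set Ds" for D
        unfolding ix_def using someI_ex[OF exi[OF that]] .
      have exD: "\<exists>t'. search_tree E D t' \<and> cost_at w (Suc d) t' \<le> cost_at wH (Suc d) (ts ! ix D)"
        if D: "D \<in> set Ds" for D
      proof -
        let ?i = "ix D"
        have i: "?i < length Cs" "D \<subseteq> Cs ! ?i" using ix[OF D] by auto
        have Dc: "D \<in> components E (H - {r})" using D Ds(1) by simp
        have Dne: "D \<noteq> {}" using components_ne[OF Dc] .
        have Dconn: "\<forall>a\<in>D. \<forall>b\<in>D. reach E D a b" using components_conn[OF sym Dc] by blast
        have DH: "D \<subseteq> H - {r}" using components_sub[OF Dc] .
        have IHi: "\<forall>H d. Cs ! ?i \<subseteq> T \<longrightarrow> (\<forall>x\<in>Cs ! ?i. 0 \<le> w x) \<longrightarrow> H \<subseteq> Cs ! ?i \<longrightarrow> H \<noteq> {}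
           \<longrightarrow> (\<forall>a\<in>H. \<forall>b\<in>H. reach E H a b) \<longrightarrow>
           (\<exists>t'. search_tree E H t' \<and> cost_at w (if rt_root (ts ! ?i) \<in> H then d else Suc d) t'
                \<le> cost_at (\<lambda>x. if x \<in> H then w x else 0) d (ts ! ?i))"
          using child[OF i(1)] by blast
        obtain t' where t': "search_tree E D t'"
          "cost_at w (if rt_root (ts ! ?i) \<in> D then Suc d else Suc (Suc d)) t'
             \<le> cost_at (\<lambda>x. if x \<in> D then w x else 0) (Suc d) (ts ! ?i)"
          using IHi[rule_format (no_asm), OF CT[OF i(1)] nnCi[OF i(1)] i(2) Dne Dconn, of "Suc d"]
          by blast
        have nnD: "\<forall>x\<in>D. 0 \<le> w x" using nn DH HS by blast
        have "cost_at w (Suc d) t' \<le> cost_at w (if rt_root (ts ! ?i) \<in> D then Suc d else Suc (Suc d)) t'"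
          by (rule st_mono_d[OF sym t'(1) nnD]) simp
        also note t'(2)
        also have "cost_at (\<lambda>x. if x \<in> D then w x else 0) (Suc d) (ts ! ?i) \<le> cost_at wH (Suc d) (ts ! ?i)"
        proof (rule st_mono_w[OF sti[OF i(1)]])
          show "\<forall>x\<in>Cs ! ?i. (if x \<in> D then w x else 0) \<le> wH x"
            using DH Cs_sub[OF i(1)] nn unfolding wH_def by auto
        qed
        finally show ?thesis using t'(1) by blast
      qed
      define tf where "tf D = (SOME t'. search_tree E D t' \<and> cost_at w (Suc d) t' \<le> cost_at wH (Suc d) (ts ! ix D))" for D
      have tf: "search_tree E D (tf D) \<and> cost_at w (Suc d) (tf D) \<le> cost_at wH (Suc d) (ts ! ix D)"
        if "D \<in> set Ds" for D
        unfolding tf_def using someI_ex[OF exD[OF that]] .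
      have la: "list_all2 (search_tree E) Ds (map tf Ds)"
        unfolding list_all2_conv_all_nth using tf nth_mem by auto
      have st': "search_tree E H (Node r (map tf Ds))"
        using search_tree.intros[OF True Ds(2) Ds(1) la] .
      have inj: "inj_on ix (set Ds)"
      proof (rule inj_onI)
        fix D1 D2 assume D1: "D1 \<in> set Ds" and D2: "D2 \<in> set Ds" and eq: "ix D1 = ix D2"
        have C: "Cs ! ix D1 \<in> components E (S - {r})" using 1(3) nth_mem ix[OF D1] by metis
        show "D1 = D2"
          by (rule same_child[OF sym irr tree ST True HS conn _ _ C])
             (use D1 D2 Ds(1) ix[OF D1] ix[OF D2] eq in auto)
      qed
      define g where "g i = cost_at wH (Suc d) (ts ! i)" for i
      have "sum_list (map (cost_at w (Suc d)) (map tf Ds)) = (\<Sum>D\<in>set Ds. cost_at w (Suc d) (tf D))"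
        using Ds(2) by (simp add: sum_list_distinct_conv_sum_set)
      also have "\<dots> \<le> (\<Sum>D\<in>set Ds. g (ix D))"
        by (rule sum_mono) (use tf in \<open>simp add: g_def\<close>)
      also have "\<dots> = (\<Sum>i\<in>ix ` set Ds. g i)"
        by (rule sum.reindex[OF inj, symmetric, simplified comp_def])
      also have "\<dots> \<le> (\<Sum>i<length ts. g i)"
      proof (rule sum_mono2)
        show "ix ` set Ds \<subseteq> {..<length ts}" using ix len by auto
        show "0 \<le> g b" if "b \<in> {..<length ts} - ix ` set Ds" for b
          using nnc that unfolding g_def by auto
      qed simp
      also have "\<dots> = sum_list (map (cost_at wH (Suc d)) ts)" using sum_ts unfolding g_def by simp
      finally have le: "sum_list (map (cost_at w (Suc d)) (map tf Ds)) \<le> sum_list (map (cost_at wH (Suc d)) ts)" .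
      have "cost_at w d (Node r (map tf Ds)) \<le> cost_at wH d (Node r ts)"
        using le True unfolding wH_def by simp
      then show ?thesis using st' True unfolding wH_def by auto
    qed
  qed
qed



lemma restrict:
  assumes "symp E" "irreflp E" "is_tree E T" "search_tree E S t" "S \<subseteq> T" "\<forall>x\<in>S. 0 \<le> w x"
    "H \<subseteq> S" "H \<noteq> {}" "\<forall>a\<in>H. \<forall>b\<in>H. reach E H a b"
  shows "\<exists>t'. search_tree E H t' \<and> cost_at w (if rt_root t \<in> H then d else Suc d) t'
              \<le> cost_at (\<lambda>x. if x \<in> H then w x else 0) d t"
  using restrict0[OF assms(1,2,3,4)] assms(5-9) by blast

lemma OPT_le:
  assumes "search_tree E H t" "\<forall>x\<in>H. 0 \<le> w x"
  shows "OPT E H w \<le> cost w t"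
  unfolding OPT_def
proof (rule cInf_lower)
  show "cost w t \<in> {cost w t |t. search_tree E H t}" using assms(1) by blast
  show "bdd_below {cost w t |t. search_tree E H t}"
  proof (rule bdd_belowI)
    fix x assume "x \<in> {cost w t |t. search_tree E H t}"
    then obtain t' where "x = cost w t'" "search_tree E H t'" by blast
    then show "0 \<le> x" unfolding cost_def using st_nonneg assms(2) by blast
  qed
qed

theorem lemma1:
  fixes E :: "'a \<Rightarrow> 'a \<Rightarrow> bool" and T :: "'a set" and w :: "'a \<Rightarrow> real" and c :: 'a
  assumes "symp E" and "irreflp E"
    and "is_tree E T"
    and "\<forall>x\<in>T. w x \<ge> 0"
    and "centroid E T w c"
  shows "OPT E T w \<ge> sum w T / 2 + w c / 2 + (\<Sum>H \<in> components E (T - {c}). OPT E H w)"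
proof -
  note sym = assms(1) and irr = assms(2) and tree = assms(3) and nn = assms(4)
  have finT: "finite T" and Tne: "T \<noteq> {}" using tree unfolding is_tree_def by auto
  have cT: "c \<in> T" and cent: "\<forall>H\<in>components E (T - {c}). sum w H \<le> sum w T / 2"
    using assms(5) unfolding centroid_def by auto
  define CC where "CC = components E (T - {c})"
  have finCC: "finite CC" unfolding CC_def using finT finite_components by blast
  define m where "m = sum w T"
  have "sum w T = w c + sum w (T - {c})" using finT cT by (simp add: sum.remove)
  then have msplit: "m = w c + (\<Sum>H\<in>CC. sum w H)"
    unfolding m_def CC_def using sum_components[OF sym, of "T - {c}" w] finT by simp
  have HT: "H \<subseteq> T - {c}" if "H \<in> CC" for H using that components_sub unfolding CC_def by blast
  have Hne: "H \<noteq> {}" if "H \<in> CC" for H using that components_ne unfolding CC_def by blast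
  have Hconn: "\<forall>a\<in>H. \<forall>b\<in>H. reach E H a b" if "H \<in> CC" for H
    using that components_conn[OF sym] unfolding CC_def by blast
  have nnH: "0 \<le> sum w H" if "H \<in> CC" for H using HT[OF that] nn by (meson subset_iff sum_nonneg DiffD1)
  have sumnn: "0 \<le> (\<Sum>H\<in>CC. sum w H)" using nnH by (simp add: sum_nonneg)
  have wc0: "0 \<le> w c" using nn cT by blast
  let ?X = "sum w T / 2 + w c / 2 + (\<Sum>H \<in> CC. OPT E H w)"
  have main: "?X \<le> cost w t" if st: "search_tree E T t" for t
  proof -
    obtain r ts where t: "t = Node r ts" by (cases t)
    have rT: "r \<in> T" using st_root[OF st] t by simp
    define wc where "wc = (\<lambda>x. if x = c then w x else 0)"
    define wh where "wh H = (\<lambda>x. if x \<in> H then w x else 0)" for H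
    have pw: "w x = wc x + (\<Sum>H\<in>CC. wh H x)" if x: "x \<in> T" for x
    proof (cases "x = c")
      case True
      have "(\<Sum>H\<in>CC. wh H x) = 0" using HT True unfolding wh_def by (intro sum.neutral) auto
      then show ?thesis using True unfolding wc_def by simp
    next
      case False
      define Hx where "Hx = component E (T - {c}) x"
      have xT: "x \<in> T - {c}" using x False by simp
      have Hx: "Hx \<in> CC" unfolding Hx_def CC_def by (rule in_components[OF xT])
      have xHx: "x \<in> Hx" unfolding Hx_def by (rule comp_self)
      have "(\<Sum>H\<in>CC. wh H x) = (\<Sum>H\<in>CC. if H = Hx then w x else 0)"
      proof (rule sum.cong)
        fix H assume H: "H \<in> CC"
        have "x \<in> H \<longleftrightarrow> H = Hx"
          using components_disj[OF sym, of H "T - {c}" Hx x] H Hx xHx unfolding CC_def by auto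
        then show "wh H x = (if H = Hx then w x else 0)" unfolding wh_def by simp
      qed simp
      also have "\<dots> = w x" using Hx finCC by (simp add: sum.delta)
      finally show ?thesis using False unfolding wc_def by simp
    qed
    have dec: "cost w t = cost_at wc 1 t + (\<Sum>H\<in>CC. cost_at (wh H) 1 t)"
    proof -
      have "cost w t = cost_at (\<lambda>x. wc x + (\<Sum>H\<in>CC. wh H x)) 1 t"
        unfolding cost_def by (rule st_cong[OF st]) (use pw in auto)
      also have "\<dots> = cost_at wc 1 t + cost_at (\<lambda>x. \<Sum>H\<in>CC. wh H x) 1 t" by (rule cost_add)
      also have "cost_at (\<lambda>x. \<Sum>H\<in>CC. wh H x) 1 t = (\<Sum>H\<in>CC. cost_at (wh H) 1 t)"
        by (rule cost_sum[OF finCC])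
      finally show ?thesis .
    qed
    have perH: "OPT E H w + (if r \<in> H then 0 else sum w H) \<le> cost_at (wh H) 1 t" if H: "H \<in> CC" for H
    proof -
      have HT': "H \<subseteq> T" using HT[OF H] by blast
      have nnH': "\<forall>x\<in>H. 0 \<le> w x" using HT' nn by blast
      obtain t' where t': "search_tree E H t'"
        "cost_at w (if rt_root t \<in> H then 1 else Suc 1) t' \<le> cost_at (wh H) 1 t"
        using restrict[OF sym irr tree st order_refl nn HT' Hne[OF H] Hconn[OF H], of 1]
        unfolding wh_def by blast
      have O: "OPT E H w \<le> cost_at w 1 t'" using OPT_le[OF t'(1) nnH'] unfolding cost_def .
      have sh: "cost_at w (Suc 1) t' = cost_at w 1 t' + sum w H" by (rule st_shift[OF sym t'(1)])
      show ?thesis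
      proof (cases "r \<in> H")
        case True
        then show ?thesis using t'(2) O t by simp
      next
        case False
        then have "cost_at w (Suc 1) t' \<le> cost_at (wh H) 1 t" using t'(2) t by simp
        then show ?thesis using False O sh by simp
      qed
    qed
    have wcb: "(if r = c then w c else 2 * w c) \<le> cost_at wc 1 t"
    proof -
      obtain Cs where Cs: "distinct Cs" "set Cs = components E (T - {r})" "list_all2 (search_tree E) Cs ts"
        using st unfolding t by (cases rule: search_tree.cases) auto
      have nnwc: "\<forall>x\<in>T. 0 \<le> wc x" using nn unfolding wc_def by simp
      have "sum_list (map (\<lambda>C. real (Suc 1) * sum wc C) Cs) \<le> sum_list (map (cost_at wc (Suc 1)) ts)"
      proof (rule la2_sum_le[OF Cs(3)])
        fix C t' assume C: "C \<in> set Cs" and st': "search_tree E C t'"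
        have "C \<subseteq> T" using C Cs(2) components_sub by blast
        then show "real (Suc 1) * sum wc C \<le> cost_at wc (Suc 1) t'"
          using st_lb[OF sym st'] nnwc by blast
      qed
      moreover have "sum_list (map (\<lambda>C. real (Suc 1) * sum wc C) Cs) = 2 * sum wc (T - {r})"
      proof -
        have "sum_list (map (\<lambda>C. real (Suc 1) * sum wc C) Cs) = (\<Sum>C\<in>set Cs. 2 * sum wc C)"
          using Cs(1) by (simp add: sum_list_distinct_conv_sum_set)
        also have "\<dots> = 2 * (\<Sum>C\<in>components E (T - {r}). sum wc C)"
          using Cs(2) by (simp add: sum_distrib_left)
        also have "\<dots> = 2 * sum wc (T - {r})"
          using sum_components[OF sym, of "T - {r}" wc] finT by simp
        finally show ?thesis .
      qed
      moreover have "sum wc (T - {r}) = (if r = c then 0 else w c)"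
        unfolding wc_def using finT cT by (simp add: sum.delta)
      moreover have "cost_at wc 1 t = wc r + sum_list (map (cost_at wc (Suc 1)) ts)"
        unfolding t by simp
      ultimately show ?thesis unfolding wc_def by (auto split: if_splits)
    qed
    have sumOPT: "(\<Sum>H\<in>CC. OPT E H w) + (\<Sum>H\<in>CC. if r \<in> H then 0 else sum w H) \<le> (\<Sum>H\<in>CC. cost_at (wh H) 1 t)"
      using perH by (simp add: sum.distrib[symmetric] sum_mono)
    show ?thesis
    proof (cases "r = c")
      case True
      have "(\<Sum>H\<in>CC. if r \<in> H then 0 else sum w H) = (\<Sum>H\<in>CC. sum w H)"
        using HT True by (intro sum.cong) auto
      then have C: "(\<Sum>H\<in>CC. OPT E H w) + (\<Sum>H\<in>CC. sum w H) \<le> (\<Sum>H\<in>CC. cost_at (wh H) 1 t)"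
        using sumOPT by simp
      have B: "w c \<le> cost_at wc 1 t" using wcb True by simp
      have ms: "sum w T = w c + (\<Sum>H\<in>CC. sum w H)" using msplit unfolding m_def .
      show ?thesis using dec B C ms sumnn by linarith
    next
      case False
      define H0 where "H0 = component E (T - {c}) r"
      have rT': "r \<in> T - {c}" using rT False by simp
      have H0: "H0 \<in> CC" unfolding H0_def CC_def by (rule in_components[OF rT'])
      have rH0: "r \<in> H0" unfolding H0_def by (rule comp_self)
      have "(\<Sum>H\<in>CC. if r \<in> H then 0 else sum w H) = (\<Sum>H\<in>CC. sum w H - (if H = H0 then sum w H else 0))"
      proof (rule sum.cong)
        fix H assume H: "H \<in> CC"
        have "r \<in> H \<longleftrightarrow> H = H0"
          using components_disj[OF sym, of H "T - {c}" H0 r] H H0 rH0 unfolding CC_def by auto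
        then show "(if r \<in> H then 0 else sum w H) = sum w H - (if H = H0 then sum w H else 0)" by simp
      qed simp
      also have "\<dots> = (\<Sum>H\<in>CC. sum w H) - sum w H0"
        using H0 finCC by (simp add: sum_subtractf sum.delta)
      finally have eq: "(\<Sum>H\<in>CC. if r \<in> H then 0 else sum w H) = (\<Sum>H\<in>CC. sum w H) - sum w H0" .
      have "sum w H0 \<le> m / 2" using cent H0 unfolding CC_def m_def by blast
      then have h0: "sum w H0 \<le> sum w T / 2" unfolding m_def .
      have C: "(\<Sum>H\<in>CC. OPT E H w) + ((\<Sum>H\<in>CC. sum w H) - sum w H0) \<le> (\<Sum>H\<in>CC. cost_at (wh H) 1 t)"
        using sumOPT eq by simp
      have B: "2 * w c \<le> cost_at wc 1 t" using wcb False by simp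
      have ms: "sum w T = w c + (\<Sum>H\<in>CC. sum w H)" using msplit unfolding m_def .
      show ?thesis using dec B C ms h0 wc0 by linarith
    qed
  qed
  obtain t0 where "search_tree E T t0" using st_exists[OF finT Tne] by blast
  then have ne: "{cost w t |t. search_tree E T t} \<noteq> {}" by blast
  have eqO: "OPT E T w = Inf {cost w t |t. search_tree E T t}" by (rule OPT_def)
  have "?X \<le> Inf {cost w t |t. search_tree E T t}"
  proof (rule cInf_greatest[OF ne])
    fix x assume "x \<in> {cost w t |t. search_tree E T t}"
    then obtain t where "x = cost w t" "search_tree E T t" by blast
    then show "?X \<le> x" using main by simp
  qed
  then have "?X \<le> OPT E T w" using eqO by simp
  then show ?thesis unfolding CC_def .
qed


end
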